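(* Let $(\Xi,Z)$ be a random marked closed set. Its distribution (as a probability measure on $\Phi_{usc}$) is completely determined by the joint probabilities \[\mathbb{P}\big(\sup_{x\in B_i\cap\Xi}Z(x)<t_i,\ B_i\cap\Xi\neq\varnothing,\ i\in I;\ B_j\cap\Xi=\varnothing,\ j\in\{1,\ldots,n\}\setminus I\big),\] where $n\in\mathbb{N}$, $B_1,\ldots,B_n$ are compact subsets of $\mathbb{R}^d$, $t_1,\ldots,t_n\in\overline{\mathbb{R}}$, and $I\subseteq\{1,\ldots,n\}$.
   Context: $\overline{\mathbb{R}}=[-\infty,\infty]$. $\Phi_{usc}=\{(X,f):\,X\subseteq\mathbb{R}^d\text{ closed},\ f:X\rightarrow\overline{\mathbb{R}}\text{ upper semi-continuous}\}$, identified via $\tau(X,f)=\{(x,t)\in X\times\overline{\mathbb{R}}:\,t\leq f(x)\}$ with a family of closed subsets of $\mathbb{R}^d\times\overline{\mathbb{R}}$ (with the Fell topology and its Borel $\sigma$-field). Given a complete probability space $(\Omega,\mathcal{A},\mathbb{P})$, a random marked closed set is a map $(\Xi,Z):\Omega\rightarrow\Phi_{usc}$ such that $\{\omega:\,\tau(\Xi,Z)\cap B\neq\varnothing\}\in\mathcal{A}$ for every compact $B\subseteq\mathbb{R}^d\times\overline{\mathbb{R}}$. *)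

theory Defs
  imports "HOL-Probability.Probability"
begin

definition usc_on :: "'a::topological_space set \<Rightarrow> ('a \<Rightarrow> ereal) \<Rightarrow> bool" where
  "usc_on X f \<longleftrightarrow> (\<forall>t::ereal. openin (top_of_set X) {x \<in> X. f x < t})"

definition hypo :: "'a set \<Rightarrow> ('a \<Rightarrow> ereal) \<Rightarrow> ('a \<times> ereal) set" where
  "hypo X f = {(x, t). x \<in> X \<and> t \<le> f x}"

definition fell_topology :: "('b::topological_space) set topology" where
  "fell_topology = subtopology
     (topology_generated_by
        ({{F. closed F \<and> F \<inter> K = {}} | K. compact K} \<union>
         {{F. closed F \<and> F \<inter> G \<noteq> {}} | G. open G}))
     {F. closed F}"

definition borel_of_top :: "'c topology \<Rightarrow> 'c measure" where
  "borel_of_top T = sigma (topspace T) {U. openin T U}"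

definition random_marked_closed_set ::
  "'o measure \<Rightarrow> ('o \<Rightarrow> 'a::euclidean_space set) \<Rightarrow> ('o \<Rightarrow> 'a \<Rightarrow> ereal) \<Rightarrow> bool" where
  "random_marked_closed_set M Xi Z \<longleftrightarrow>
     (\<forall>\<omega>\<in>space M. closed (Xi \<omega>) \<and> usc_on (Xi \<omega>) (Z \<omega>)) \<and>
     (\<forall>B::('a \<times> ereal) set. compact B \<longrightarrow>
        {\<omega> \<in> space M. hypo (Xi \<omega>) (Z \<omega>) \<inter> B \<noteq> {}} \<in> sets M)"

definition rmcs_distr ::
  "'o measure \<Rightarrow> ('o \<Rightarrow> 'a::euclidean_space set) \<Rightarrow> ('o \<Rightarrow> 'a \<Rightarrow> ereal) \<Rightarrow> ('a \<times> ereal) set measure" where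
  "rmcs_distr M Xi Z = distr M (borel_of_top fell_topology) (\<lambda>\<omega>. hypo (Xi \<omega>) (Z \<omega>))"

definition joint_prob ::
  "'o measure \<Rightarrow> ('o \<Rightarrow> 'a set) \<Rightarrow> ('o \<Rightarrow> 'a \<Rightarrow> ereal) \<Rightarrow> nat \<Rightarrow> (nat \<Rightarrow> 'a set)
     \<Rightarrow> (nat \<Rightarrow> ereal) \<Rightarrow> nat set \<Rightarrow> real" where
  "joint_prob M Xi Z n B t I = measure M
     {\<omega> \<in> space M.
        (\<forall>i\<in>I. (SUP x\<in>B i \<inter> Xi \<omega>. Z \<omega> x) < t i \<and> B i \<inter> Xi \<omega> \<noteq> {}) \<and>
        (\<forall>j\<in>{1..n} - I. B j \<inter> Xi \<omega> = {})}"

end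

theory Submission
  imports Defs
begin

definition Qe :: "ereal set" where
  "Qe = {ereal (real_of_rat r) | r. True} \<union> {\<infinity>, -\<infinity>}"

lemma Qe_countable: "countable Qe"
proof -
  have "{ereal (real_of_rat r) | r. True} = (\<lambda>r. ereal (real_of_rat r)) ` UNIV" by auto
  then show ?thesis unfolding Qe_def by simp
qed

lemma rat_between_ereal:
  fixes x y :: ereal assumes "x < y" shows "\<exists>q\<in>Qe. x < q \<and> q < y \<and> q \<noteq> \<infinity> \<and> q \<noteq> -\<infinity>"
proof -
  obtain z1 where z1: "x < ereal z1" "ereal z1 < y" using ereal_dense2[OF assms] by auto
  obtain z2 where z2: "ereal z1 < ereal z2" "ereal z2 < y" using ereal_dense2[OF z1(2)] by auto
  obtain r where r: "z1 < real_of_rat r" "real_of_rat r < z2" using of_rat_dense z2(1) by auto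
  have "ereal z1 < ereal (real_of_rat r)" "ereal (real_of_rat r) < ereal z2" using r by simp_all
  then have "x < ereal (real_of_rat r)" "ereal (real_of_rat r) < y" using z1 z2 by (meson order.strict_trans)+
  then show ?thesis
    by (intro bexI[of _ "ereal (real_of_rat r)"]) (auto simp: Qe_def)
qed

lemma ereal_up:
  fixes S :: "ereal set" assumes "open S" "s \<in> S"
  shows "\<exists>q\<in>Qe. s \<le> q \<and> {s..q} \<subseteq> S \<and> (\<exists>U. open U \<and> s \<in> U \<and> U \<subseteq> {..q})"
proof (cases "s = \<infinity>")
  case True then show ?thesis using assms by (intro bexI[of _ \<infinity>]) (auto simp: Qe_def intro!: exI[of _ UNIV])
next
  case False
  then have "s < \<infinity>" by (simp add: less_le)
  from open_right[OF assms this] obtain b where b: "b > s" "{s..<b} \<subseteq> S" by auto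
  from rat_between_ereal[OF b(1)] obtain q where q: "q\<in>Qe" "s < q" "q < b" by auto
  have "{s..q} \<subseteq> {s..<b}" using q by auto
  then show ?thesis
    by (intro bexI[OF _ q(1)]) (use q b in \<open>auto intro!: exI[of _ "{..<q}"]\<close>)
qed

lemma ereal_down:
  fixes S :: "ereal set" assumes "open S" "s \<in> S"
  shows "\<exists>p\<in>Qe. p \<le> s \<and> {p..s} \<subseteq> S \<and> (\<exists>U. open U \<and> s \<in> U \<and> U \<subseteq> {p..})"
proof (cases "s = -\<infinity>")
  case True then show ?thesis using assms by (intro bexI[of _ "-\<infinity>"]) (auto simp: Qe_def intro!: exI[of _ UNIV])
next
  case False
  then have "-\<infinity> < s" by (simp add: less_le)
  from open_left[OF assms this] obtain b where b: "b < s" "{b<..s} \<subseteq> S" by auto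
  from rat_between_ereal[OF b(1)] obtain q where q: "q\<in>Qe" "b < q" "q < s" by auto
  have "{q..s} \<subseteq> {b<..s}" using q by auto
  then show ?thesis
    by (intro bexI[OF _ q(1)]) (use q b in \<open>auto intro!: exI[of _ "{q<..}"]\<close>)
qed

lemma ereal_box:
  fixes S :: "ereal set" assumes "open S" "s \<in> S"
  shows "\<exists>p\<in>Qe. \<exists>q\<in>Qe. p \<le> q \<and> {p..q} \<subseteq> S \<and> (\<exists>U. open U \<and> s \<in> U \<and> U \<subseteq> {p..q})"
proof -
  obtain q U1 where q: "q\<in>Qe" "s \<le> q" "{s..q} \<subseteq> S" "open U1" "s \<in> U1" "U1 \<subseteq> {..q}"
    using ereal_up[OF assms] by auto
  obtain p U2 where p: "p\<in>Qe" "p \<le> s" "{p..s} \<subseteq> S" "open U2" "s \<in> U2" "U2 \<subseteq> {p..}"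
    using ereal_down[OF assms] by auto
  have "{p..q} \<subseteq> {p..s} \<union> {s..q}" by auto
  then show ?thesis using p q
    by (intro bexI[OF _ p(1)] bexI[OF _ q(1)]) (auto intro!: exI[of _ "U1 \<inter> U2"])
qed

definition Dset :: "'a::euclidean_space set" where
  "Dset = (SOME D. countable D \<and> (\<forall>X. open X \<longrightarrow> X \<noteq> {} \<longrightarrow> (\<exists>d\<in>D. d \<in> X)))"

lemma Dset: "countable (Dset::'a::euclidean_space set)" "open X \<Longrightarrow> X \<noteq> {} \<Longrightarrow> \<exists>d\<in>(Dset::'a set). d \<in> X"
proof -
  obtain D :: "'a set" where "countable D" "\<And>X. open X \<Longrightarrow> X \<noteq> {} \<Longrightarrow> \<exists>d \<in> D. d \<in> X"
    by (rule countable_dense_setE) blast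
  then have "\<exists>D::'a set. countable D \<and> (\<forall>X. open X \<longrightarrow> X \<noteq> {} \<longrightarrow> (\<exists>d\<in>D. d \<in> X))" by blast
  from someI_ex[OF this] show "countable (Dset::'a::euclidean_space set)" "open X \<Longrightarrow> X \<noteq> {} \<Longrightarrow> \<exists>d\<in>(Dset::'a set). d \<in> X"
    unfolding Dset_def by blast+
qed

lemma point_box:
  fixes A :: "'a::euclidean_space set" assumes "open A" "a \<in> A"
  shows "\<exists>c\<in>Dset. \<exists>r\<in>\<rat>. r > 0 \<and> a \<in> ball c r \<and> cball c r \<subseteq> A"
proof -
  obtain e where e: "e > 0" "ball a e \<subseteq> A" using assms open_contains_ball by blast
  obtain c where c: "c \<in> Dset" "c \<in> ball a (e/3)" using Dset(2)[of "ball a (e/3)"] e by auto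
  obtain r where r: "r \<in> \<rat>" "e/3 < r" "r < e/2" using Rats_dense_in_real[of "e/3" "e/2"] e by auto
  have "dist a c < e/3" using c by (simp add: dist_commute)
  moreover have "cball c r \<subseteq> ball a e"
  proof
    fix x assume "x \<in> cball c r"
    then have "dist c x \<le> r" by simp
    with \<open>dist a c < e/3\<close> r have "dist a x < e" using dist_triangle[of a x c] by linarith
    then show "x \<in> ball a e" by simp
  qed
  ultimately show ?thesis using c r e by (intro bexI[OF _ c(1)] bexI[OF _ r(1)]) (auto simp: dist_commute)
qed

definition Nt :: "('a::euclidean_space set \<times> ereal \<times> ereal) set" where
  "Nt = {(cball c r, p, q) | c r p q. c \<in> Dset \<and> r \<in> \<rat> \<and> r > 0 \<and> p \<in> Qe \<and> q \<in> Qe \<and> p \<le> q}"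

definition bx :: "'a set \<times> ereal \<times> ereal \<Rightarrow> ('a \<times> ereal) set" where
  "bx N = (case N of (B, p, q) \<Rightarrow> B \<times> {p..q})"

lemma Nt_countable: "countable (Nt :: ('a::euclidean_space set \<times> ereal \<times> ereal) set)"
proof -
  let ?f = "\<lambda>x::(('a \<times> real) \<times> (ereal \<times> ereal)). (cball (fst (fst x)) (snd (fst x)), fst (snd x), snd (snd x))"
  have "Nt \<subseteq> ?f ` ((Dset \<times> \<rat>) \<times> (Qe \<times> Qe))"
  proof
    fix N assume "N \<in> (Nt :: ('a set \<times> ereal \<times> ereal) set)"
    then obtain c r p q where "N = (cball c r, p, q)" "c \<in> Dset" "r \<in> \<rat>" "p \<in> Qe" "q \<in> Qe"
      unfolding Nt_def by blast
    then show "N \<in> ?f ` ((Dset \<times> \<rat>) \<times> (Qe \<times> Qe))"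
      by (intro image_eqI[where x="((c,r),(p,q))"]) simp_all
  qed
  moreover have "countable ((Dset \<times> (\<rat>::real set)) \<times> (Qe \<times> Qe))"
    by (intro countable_SIGMA Dset(1) Qe_countable countable_rat)
  ultimately show ?thesis by (rule countable_subset[OF _ countable_image])
qed

lemma Nt_shape: "N \<in> Nt \<Longrightarrow> \<exists>B p q. N = (B, p, q) \<and> compact B \<and> p \<le> q"
  unfolding Nt_def using compact_cball by blast

lemma compact_ereal_Icc: "compact {p..q::ereal}"
  by (rule compact_eq_closed[THEN iffD2]) (rule closed_atLeastAtMost)

lemma bx_compact: "N \<in> Nt \<Longrightarrow> compact (bx N)"
  using Nt_shape[of N] unfolding bx_def by (auto intro!: compact_Times simp: compact_ereal_Icc)

lemma N2:
  fixes V :: "('a::euclidean_space \<times> ereal) set"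
  assumes "open V" "y \<in> V"
  shows "\<exists>N\<in>Nt. \<exists>U. open U \<and> y \<in> U \<and> U \<subseteq> bx N \<and> bx N \<subseteq> V"
proof -
  obtain A S where AS: "open A" "open S" "y \<in> A \<times> S" "A \<times> S \<subseteq> V"
    using open_prod_elim[OF assms] by blast
  obtain a s where y: "y = (a, s)" by (cases y)
  have aA: "a \<in> A" and sS: "s \<in> S" using AS(3) y by auto
  obtain c r where cr: "c \<in> Dset" "r \<in> \<rat>" "r > 0" "a \<in> ball c r" "cball c r \<subseteq> A"
    using point_box[OF AS(1) aA] by blast
  obtain p q U where pq: "p \<in> Qe" "q \<in> Qe" "p \<le> q" "{p..q} \<subseteq> S" "open U" "s \<in> U" "U \<subseteq> {p..q}"
    using ereal_box[OF AS(2) sS] by blast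
  have "(cball c r, p, q) \<in> Nt" unfolding Nt_def using cr pq by auto
  moreover have "ball c r \<times> U \<subseteq> cball c r \<times> {p..q}" using pq(7) by auto
  moreover have "cball c r \<times> {p..q} \<subseteq> V" using AS(4) cr(5) pq(4) by auto
  ultimately show ?thesis using cr pq y
    by (intro bexI[of _ "(cball c r, p, q)"] exI[of _ "ball c r \<times> U"]) (auto simp: bx_def open_Times)
qed

lemma N3:
  fixes K F :: "('a::euclidean_space \<times> ereal) set"
  assumes "compact K" "closed F" "K \<inter> F = {}"
  shows "\<exists>Ks. set Ks \<subseteq> Nt \<and> K \<subseteq> \<Union>(bx ` set Ks) \<and> F \<inter> \<Union>(bx ` set Ks) = {}"
proof -
  define T where "T = {U. open U \<and> (\<exists>N\<in>Nt. U \<subseteq> bx N \<and> bx N \<subseteq> -F)}"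
  have "K \<subseteq> \<Union>T"
  proof
    fix y assume "y \<in> K"
    then have "y \<in> -F" using assms by auto
    from N2[OF _ this] assms(2) obtain N U where "N\<in>Nt" "open U" "y \<in> U" "U \<subseteq> bx N" "bx N \<subseteq> -F"
      by (auto simp: open_Compl)
    then show "y \<in> \<Union>T" unfolding T_def by blast
  qed
  moreover have "\<forall>B\<in>T. open B" unfolding T_def by auto
  ultimately obtain T' where T': "T' \<subseteq> T" "finite T'" "K \<subseteq> \<Union>T'"
    using compactE[OF assms(1)] by metis
  have "\<forall>U\<in>T'. \<exists>N. N\<in>Nt \<and> U \<subseteq> bx N \<and> bx N \<subseteq> -F" using T' unfolding T_def by blast
  then obtain g where g: "\<And>U. U\<in>T' \<Longrightarrow> g U \<in> Nt \<and> U \<subseteq> bx (g U) \<and> bx (g U) \<subseteq> -F" by metis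
  obtain Ks where Ks: "set Ks = g ` T'" using finite_list[of "g ` T'"] T'(2) by auto
  show ?thesis
  proof (intro exI[of _ Ks] conjI)
    show "set Ks \<subseteq> Nt" using Ks g by auto
    show "K \<subseteq> \<Union>(bx ` set Ks)" using T'(3) Ks g by fastforce
    show "F \<inter> \<Union>(bx ` set Ks) = {}" using Ks g by fastforce
  qed
qed

definition cset :: "('a::topological_space set \<times> ereal \<times> ereal) list \<Rightarrow> ('a set \<times> ereal \<times> ereal) list \<Rightarrow> ('a \<times> ereal) set set" where
  "cset Ks Ns = {F. closed F \<and> F \<inter> \<Union>(bx ` set Ks) = {} \<and> (\<forall>N\<in>set Ns. F \<inter> bx N \<noteq> {})}"

lemma cset_append: "cset (K1 @ K2) (N1 @ N2) = cset K1 N1 \<inter> cset K2 N2"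
  unfolding cset_def by auto

abbreviation SG :: "('a::euclidean_space \<times> ereal) set set set" where
  "SG \<equiv> {{F. closed F \<and> F \<inter> K = {}} | K. compact K} \<union> {{F. closed F \<and> F \<inter> G \<noteq> {}} | G. open G}"

lemma cset_closed: "F \<in> cset Ks Ns \<Longrightarrow> closed F"
  unfolding cset_def by simp

lemma gen_P:
  assumes "generate_topology_on (SG::('a::euclidean_space \<times> ereal) set set set) U"
  shows "\<forall>F\<in>U. closed F \<and> (\<exists>Ks Ns. set Ks \<subseteq> Nt \<and> set Ns \<subseteq> Nt \<and> F \<in> cset Ks Ns \<and> cset Ks Ns \<subseteq> U)"
  using assms
proof (induction rule: generate_topology_on.induct)
  case Empty
  then show ?case by simp
next
  case (Int a b)
  show ?case
  proof
    fix F assume F: "F \<in> a \<inter> b"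
    have "closed F \<and> (\<exists>Ks Ns. set Ks \<subseteq> Nt \<and> set Ns \<subseteq> Nt \<and> F \<in> cset Ks Ns \<and> cset Ks Ns \<subseteq> a)"
      using Int.IH(1) F by blast
    then obtain K1 N1 where A: "closed F" "set K1 \<subseteq> Nt" "set N1 \<subseteq> Nt" "F \<in> cset K1 N1" "cset K1 N1 \<subseteq> a"
      by (elim conjE exE)
    have "closed F \<and> (\<exists>Ks Ns. set Ks \<subseteq> Nt \<and> set Ns \<subseteq> Nt \<and> F \<in> cset Ks Ns \<and> cset Ks Ns \<subseteq> b)"
      using Int.IH(2) F by blast
    then obtain K2 N2 where B: "set K2 \<subseteq> Nt" "set N2 \<subseteq> Nt" "F \<in> cset K2 N2" "cset K2 N2 \<subseteq> b"
      by (elim conjE exE)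
    have "set (K1 @ K2) \<subseteq> Nt" "set (N1 @ N2) \<subseteq> Nt" using A B by simp_all
    moreover have "F \<in> cset (K1 @ K2) (N1 @ N2)" using A(4) B(3) by (simp add: cset_append)
    moreover have "cset (K1 @ K2) (N1 @ N2) \<subseteq> a \<inter> b" using A(5) B(4) unfolding cset_append by (rule Int_mono)
    ultimately show "closed F \<and> (\<exists>Ks Ns. set Ks \<subseteq> Nt \<and> set Ns \<subseteq> Nt \<and> F \<in> cset Ks Ns \<and> cset Ks Ns \<subseteq> a \<inter> b)"
      using A(1) by blast
  qed
next
  case (UN K)
  show ?case
  proof
    fix F assume "F \<in> \<Union>K"
    then obtain k where k: "k \<in> K" "F \<in> k" by (rule UnionE)
    have "closed F \<and> (\<exists>Ks Ns. set Ks \<subseteq> Nt \<and> set Ns \<subseteq> Nt \<and> F \<in> cset Ks Ns \<and> cset Ks Ns \<subseteq> k)"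
      using UN.IH[OF k(1)] k(2) by blast
    moreover have "k \<subseteq> \<Union>K" using k(1) by (rule Union_upper)
    ultimately show "closed F \<and> (\<exists>Ks Ns. set Ks \<subseteq> Nt \<and> set Ns \<subseteq> Nt \<and> F \<in> cset Ks Ns \<and> cset Ks Ns \<subseteq> \<Union>K)"
      by (meson order_trans)
  qed
next
  case (Basis s)
  show ?case
  proof
    fix F assume F: "F \<in> s"
    from Basis consider (miss) K where "compact K" "s = {F. closed F \<and> F \<inter> K = {}}"
      | (hit) G where "open G" "s = {F. closed F \<and> F \<inter> G \<noteq> {}}" by blast
    then show "closed F \<and> (\<exists>Ks Ns. set Ks \<subseteq> Nt \<and> set Ns \<subseteq> Nt \<and> F \<in> cset Ks Ns \<and> cset Ks Ns \<subseteq> s)"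
    proof cases
      case miss
      with F have cF: "closed F" and KF: "K \<inter> F = {}" by auto
      from N3[OF miss(1) cF KF] obtain Ks where Ks: "set Ks \<subseteq> Nt" "K \<subseteq> \<Union>(bx ` set Ks)" "F \<inter> \<Union>(bx ` set Ks) = {}"
        by blast
      have "F \<in> cset Ks []" using cF Ks(3) by (simp add: cset_def)
      moreover have "cset Ks [] \<subseteq> s"
      proof
        fix G assume "G \<in> cset Ks []"
        then have "closed G" "G \<inter> \<Union>(bx ` set Ks) = {}" by (simp_all add: cset_def)
        with Ks(2) have "closed G" "G \<inter> K = {}" by blast+
        then show "G \<in> s" using miss(2) by simp
      qed
      ultimately show ?thesis using Ks(1) cF by (intro conjI exI[of _ Ks] exI[of _ "[]"]) simp_all
    next
      case hit
      with F have cF: "closed F" and "F \<inter> G \<noteq> {}" by auto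
      then obtain y where y: "y \<in> F" "y \<in> G" by blast
      from N2[OF hit(1) y(2)] obtain N where N: "N \<in> Nt" "y \<in> bx N" "bx N \<subseteq> G" by blast
      have "F \<in> cset [] [N]" using cF y(1) N(2) by (auto simp: cset_def)
      moreover have "cset [] [N] \<subseteq> s"
      proof
        fix H assume "H \<in> cset [] [N]"
        then have "closed H" "H \<inter> bx N \<noteq> {}" by (simp_all add: cset_def)
        with N(3) have "closed H" "H \<inter> G \<noteq> {}" by blast+
        then show "H \<in> s" using hit(2) by simp
      qed
      ultimately show ?thesis using N(1) cF by (intro conjI exI[of _ "[]"] exI[of _ "[N]"]) simp_all
    qed
  qed
qed

lemma fell_open_rep:
  assumes "openin (fell_topology :: ('a::euclidean_space \<times> ereal) set topology) U"
  shows "U = \<Union>{cset Ks Ns | Ks Ns. set Ks \<subseteq> Nt \<and> set Ns \<subseteq> Nt \<and> cset Ks Ns \<subseteq> U}"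
    and "U \<subseteq> {F. closed F}"
proof -
  have "openin (subtopology (topology_generated_by SG) {F. closed F}) U"
    using assms by (simp add: fell_topology_def)
  then obtain V where V: "openin (topology_generated_by SG) V" "U = V \<inter> {F. closed F}"
    unfolding openin_subtopology by (elim exE conjE)
  have gV: "generate_topology_on SG V" using V(1) by (rule openin_topology_generated_by)
  show "U \<subseteq> {F. closed F}" using V(2) by (rule ssubst) (rule Int_lower2)
  show "U = \<Union>{cset Ks Ns | Ks Ns. set Ks \<subseteq> Nt \<and> set Ns \<subseteq> Nt \<and> cset Ks Ns \<subseteq> U}"
  proof (rule subset_antisym)
    show "U \<subseteq> \<Union>{cset Ks Ns | Ks Ns. set Ks \<subseteq> Nt \<and> set Ns \<subseteq> Nt \<and> cset Ks Ns \<subseteq> U}"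
    proof
      fix F assume "F \<in> U"
      then have "F \<in> V" using V(2) by simp
      with gen_P[OF gV] obtain Ks Ns where KN: "set Ks \<subseteq> Nt" "set Ns \<subseteq> Nt" "F \<in> cset Ks Ns" "cset Ks Ns \<subseteq> V"
        by blast
      have "cset Ks Ns \<subseteq> {F. closed F}" by (auto simp: cset_def)
      then have "cset Ks Ns \<subseteq> U" using KN(4) V(2) by (simp add: le_infI)
      then have "cset Ks Ns \<in> {cset Ks Ns | Ks Ns. set Ks \<subseteq> Nt \<and> set Ns \<subseteq> Nt \<and> cset Ks Ns \<subseteq> U}"
        using KN(1,2) by blast
      then show "F \<in> \<Union>{cset Ks Ns | Ks Ns. set Ks \<subseteq> Nt \<and> set Ns \<subseteq> Nt \<and> cset Ks Ns \<subseteq> U}"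
        using KN(3) by (rule UnionI)
    qed
  next
    show "\<Union>{cset Ks Ns | Ks Ns. set Ks \<subseteq> Nt \<and> set Ns \<subseteq> Nt \<and> cset Ks Ns \<subseteq> U} \<subseteq> U"
      by (rule Union_least) blast
  qed
qed

definition downcl :: "('a \<times> ereal) set \<Rightarrow> bool" where
  "downcl F \<longleftrightarrow> (\<forall>x t s. (x, t) \<in> F \<longrightarrow> s \<le> t \<longrightarrow> (x, s) \<in> F)"

definition Omg :: "('a::euclidean_space \<times> ereal) set set" where
  "Omg = {F. closed F}"

definition HH :: "('a::euclidean_space \<times> ereal) set set" where
  "HH = {F. closed F \<and> downcl F}"

definition gset :: "('a::euclidean_space set \<times> ereal) set \<Rightarrow> ('a \<times> ereal) set set" where
  "gset P = {F. closed F \<and> (\<forall>(B,t)\<in>P. F \<inter> (B \<times> {t..}) = {})}"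

definition GG :: "('a::euclidean_space \<times> ereal) set set set" where
  "GG = {gset P | P. finite P \<and> (\<forall>(B,t)\<in>P. compact B)}"

definition upK :: "'a set \<times> ereal \<times> ereal \<Rightarrow> 'a set \<times> ereal" where
  "upK N = (case N of (B, p, q) \<Rightarrow> (B, p))"

definition Ap :: "('a::euclidean_space set \<times> ereal \<times> ereal) list \<Rightarrow> ('a set \<times> ereal \<times> ereal) list \<Rightarrow> ('a \<times> ereal) set set" where
  "Ap Ks Ns = gset (upK ` set Ks) \<inter> (\<Inter>N\<in>set Ns. Omg - gset {upK N})"

lemma GG_Pow: "GG \<subseteq> Pow Omg"
  unfolding GG_def gset_def Omg_def by auto

lemma box_up:
  assumes "downcl F" "N \<in> Nt"
  shows "F \<inter> bx N = {} \<longleftrightarrow> F \<inter> (fst (upK N) \<times> {snd (upK N)..}) = {}"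
proof -
  obtain B p q where N: "N = (B, p, q)" "p \<le> q" using Nt_shape[OF assms(2)] by blast
  have "F \<inter> B \<times> {p..q} = {} \<longleftrightarrow> F \<inter> B \<times> {p..} = {}"
  proof
    assume E: "F \<inter> B \<times> {p..q} = {}"
    show "F \<inter> B \<times> {p..} = {}"
    proof (rule ccontr)
      assume "F \<inter> B \<times> {p..} \<noteq> {}"
      then obtain x u where xu: "(x,u) \<in> F" "x \<in> B" "p \<le> u" by auto
      have "(x, min u q) \<in> F" using assms(1) xu(1) unfolding downcl_def by (meson min.cobounded1)
      moreover have "p \<le> min u q" using xu(3) N(2) by simp
      ultimately show False using E xu(2) by auto
    qed
  qed auto
  then show ?thesis using N by (simp add: bx_def upK_def)
qed

lemma upK_Nt: "N \<in> Nt \<Longrightarrow> compact (fst (upK N))"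
  using Nt_shape[of N] by (auto simp: upK_def)

lemma Ap_trace:
  assumes "F \<in> HH" "set Ks \<subseteq> Nt" "set Ns \<subseteq> Nt"
  shows "F \<in> cset Ks Ns \<longleftrightarrow> F \<in> Ap Ks Ns"
proof -
  have cF: "closed F" and dF: "downcl F" using assms(1) by (auto simp: HH_def)
  have 1: "F \<inter> \<Union>(bx ` set Ks) = {} \<longleftrightarrow> (\<forall>(B,t)\<in>upK ` set Ks. F \<inter> (B \<times> {t..}) = {})"
  proof -
    have "F \<inter> \<Union>(bx ` set Ks) = {} \<longleftrightarrow> (\<forall>N\<in>set Ks. F \<inter> bx N = {})" by blast
    also have "\<dots> \<longleftrightarrow> (\<forall>N\<in>set Ks. F \<inter> (fst (upK N) \<times> {snd (upK N)..}) = {})"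
      using box_up[OF dF] assms(2) by blast
    also have "\<dots> \<longleftrightarrow> (\<forall>(B,t)\<in>upK ` set Ks. F \<inter> (B \<times> {t..}) = {})"
      by (auto simp: split_beta)
    finally show ?thesis .
  qed
  have 2: "(\<forall>N\<in>set Ns. F \<inter> bx N \<noteq> {}) \<longleftrightarrow> (\<forall>N\<in>set Ns. F \<in> Omg - gset {upK N})"
  proof -
    have "F \<inter> bx N \<noteq> {} \<longleftrightarrow> F \<in> Omg - gset {upK N}" if N: "N \<in> set Ns" for N
    proof -
      have e: "F \<in> Omg - gset {upK N} \<longleftrightarrow> F \<inter> (fst (upK N) \<times> {snd (upK N)..}) \<noteq> {}"
        using cF by (cases "upK N") (simp add: gset_def Omg_def)
      show ?thesis unfolding e using box_up[OF dF, of N] N assms(3) by blast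
    qed
    then show ?thesis by blast
  qed
  have g: "F \<in> gset (upK ` set Ks) \<longleftrightarrow> (\<forall>(B,t)\<in>upK ` set Ks. F \<inter> (B \<times> {t..}) = {})"
    using cF unfolding gset_def by (rule_tac iffI) simp_all
  have i: "F \<in> (\<Inter>N\<in>set Ns. Omg - gset {upK N}) \<longleftrightarrow> (\<forall>N\<in>set Ns. F \<in> Omg - gset {upK N})" by blast
  have c: "F \<in> cset Ks Ns \<longleftrightarrow> (F \<inter> \<Union>(bx ` set Ks) = {} \<and> (\<forall>N\<in>set Ns. F \<inter> bx N \<noteq> {}))"
    using cF unfolding cset_def by (rule_tac iffI) simp_all
  have a: "F \<in> Ap Ks Ns \<longleftrightarrow> F \<in> gset (upK ` set Ks) \<and> F \<in> (\<Inter>N\<in>set Ns. Omg - gset {upK N})"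
    unfolding Ap_def by (rule Int_iff)
  show ?thesis unfolding c a g i 1 2 ..
qed

lemma Ap_sets:
  assumes "set Ks \<subseteq> Nt" "set Ns \<subseteq> (Nt :: ('a::euclidean_space set \<times> ereal \<times> ereal) set)"
  shows "Ap Ks Ns \<in> sigma_sets Omg GG"
  using assms(2)
proof (induction Ns)
  case Nil
  have "finite (upK ` set Ks)" by simp
  moreover have "\<forall>(B,t)\<in>upK ` set Ks. compact B"
  proof (rule ballI)
    fix x assume "x \<in> upK ` set Ks"
    then obtain N where N: "N \<in> set Ks" "x = upK N" by blast
    then have "compact (fst x)" using assms(1) upK_Nt[of N] by auto
    then show "case x of (B,t) \<Rightarrow> compact B" by (simp add: split_beta)
  qed
  ultimately have "gset (upK ` set Ks) \<in> GG" unfolding GG_def by (intro CollectI exI[of _ "upK ` set Ks"]) simp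
  then show ?case unfolding Ap_def by (simp add: sigma_sets.Basic)
next
  case (Cons N Ns)
  interpret S: sigma_algebra Omg "sigma_sets Omg GG"
    using GG_Pow by (rule sigma_algebra_sigma_sets)
  obtain B t where Bt: "upK N = (B, t)" by (cases "upK N")
  have "compact B" using upK_Nt[of N] Cons.prems Bt by simp
  then have "gset {upK N} \<in> GG"
    unfolding GG_def Bt by (intro CollectI exI[of _ "{(B,t)}"]) simp
  then have 1: "Omg - gset {upK N} \<in> sigma_sets Omg GG" by (intro S.compl_sets sigma_sets.Basic)
  have 2: "Ap Ks Ns \<in> sigma_sets Omg GG" using Cons by simp
  have 3: "Ap Ks (N # Ns) = Ap Ks Ns \<inter> (Omg - gset {upK N})" unfolding Ap_def by (simp add: Int_ac)
  show ?case unfolding 3 using 2 1 by (rule S.Int)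
qed

lemma topspace_fell: "topspace (fell_topology :: ('a::euclidean_space \<times> ereal) set topology) = Omg"
proof -
  have "{F. closed F \<and> F \<inter> {} = {}} \<in> (SG::('a \<times> ereal) set set set)"
    by (rule UnI1) (use compact_empty in blast)
  then have "{F. closed F \<and> F \<inter> {} = {}} \<subseteq> \<Union>(SG::('a \<times> ereal) set set set)" by (rule Union_upper)
  moreover have "Omg = {F::('a \<times> ereal) set. closed F \<and> F \<inter> {} = {}}" unfolding Omg_def by simp
  ultimately have 1: "Omg \<subseteq> \<Union>(SG::('a \<times> ereal) set set set)" by (rule ssubst[rotated])
  have "topspace (fell_topology :: ('a \<times> ereal) set topology) = \<Union>(SG::('a \<times> ereal) set set set) \<inter> Omg"
    unfolding fell_topology_def Omg_def by simp
  with 1 show ?thesis by (simp add: Int_absorb1)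
qed

lemma trace:
  assumes "A \<in> sigma_sets Omg {U. openin (fell_topology :: ('a::euclidean_space \<times> ereal) set topology) U}"
  shows "\<exists>A'\<in>sigma_sets Omg GG. \<forall>F\<in>HH. F \<in> A \<longleftrightarrow> F \<in> A'"
  using assms
proof (induction rule: sigma_sets.induct)
  case (Basic U)
  then have oU: "openin fell_topology U" by simp
  define I where "I = {(Ks, Ns). set Ks \<subseteq> Nt \<and> set Ns \<subseteq> (Nt::('a set \<times> ereal \<times> ereal) set) \<and> cset Ks Ns \<subseteq> U}"
  have cI: "countable I"
  proof -
    have "I \<subseteq> lists (Nt::('a set \<times> ereal \<times> ereal) set) \<times> lists (Nt::('a set \<times> ereal \<times> ereal) set)" unfolding I_def lists_eq_set by auto
    moreover have "countable (lists (Nt::('a set \<times> ereal \<times> ereal) set) \<times> lists (Nt::('a set \<times> ereal \<times> ereal) set))"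
      using Nt_countable by (intro countable_SIGMA countable_lists)
    ultimately show ?thesis by (rule countable_subset)
  qed
  define A' where "A' = \<Union>((\<lambda>(Ks,Ns). Ap Ks Ns) ` I)"
  have "A' \<in> sigma_sets Omg GG"
    unfolding A'_def
  proof (rule sigma_sets_UNION)
    show "countable ((\<lambda>(Ks,Ns). Ap Ks Ns) ` I)" using cI by (rule countable_image)
    fix b assume "b \<in> (\<lambda>(Ks,Ns). Ap Ks Ns) ` I"
    then obtain Ks Ns where "(Ks, Ns) \<in> I" "b = Ap Ks Ns" by auto
    then show "b \<in> sigma_sets Omg GG" unfolding I_def using Ap_sets by auto
  qed
  moreover have "\<forall>F\<in>HH. F \<in> U \<longleftrightarrow> F \<in> A'"
  proof
    fix F :: "('a \<times> ereal) set" assume F: "F \<in> HH"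
    have "F \<in> U \<longleftrightarrow> (\<exists>p\<in>I. F \<in> cset (fst p) (snd p))"
    proof
      assume "F \<in> U"
      then have "F \<in> \<Union>{cset Ks Ns | Ks Ns. set Ks \<subseteq> Nt \<and> set Ns \<subseteq> Nt \<and> cset Ks Ns \<subseteq> U}"
        using fell_open_rep(1)[OF oU] by simp
      then obtain Ks Ns where "set Ks \<subseteq> Nt" "set Ns \<subseteq> Nt" "cset Ks Ns \<subseteq> U" "F \<in> cset Ks Ns"
        by blast
      then show "\<exists>p\<in>I. F \<in> cset (fst p) (snd p)" unfolding I_def by (intro bexI[of _ "(Ks,Ns)"]) simp_all
    next
      assume "\<exists>p\<in>I. F \<in> cset (fst p) (snd p)"
      then obtain p where "p \<in> I" "F \<in> cset (fst p) (snd p)" by blast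
      then show "F \<in> U" unfolding I_def by (cases p) auto
    qed
    also have "\<dots> \<longleftrightarrow> (\<exists>p\<in>I. F \<in> Ap (fst p) (snd p))"
    proof (rule bex_cong[OF refl])
      fix p assume "p \<in> I"
      then show "F \<in> cset (fst p) (snd p) \<longleftrightarrow> F \<in> Ap (fst p) (snd p)"
        unfolding I_def using Ap_trace[OF F] by (cases p) simp
    qed
    also have "\<dots> \<longleftrightarrow> F \<in> A'" unfolding A'_def by (auto simp: split_beta)
    finally show "F \<in> U \<longleftrightarrow> F \<in> A'" .
  qed
  ultimately show ?case by (rule bexI[rotated])
next
  case Empty
  show ?case by (intro bexI[of _ "{}"]) (auto intro: sigma_sets.Empty)
next
  case (Compl a)
  then obtain a' where a': "a' \<in> sigma_sets Omg GG" "\<forall>F\<in>HH. F \<in> a \<longleftrightarrow> F \<in> a'" by blast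
  have "HH \<subseteq> Omg" unfolding HH_def Omg_def by auto
  then show ?case using a' by (intro bexI[of _ "Omg - a'"]) (auto intro: sigma_sets.Compl)
next
  case (Union a)
  then have "\<forall>i. \<exists>a'. a' \<in> sigma_sets Omg GG \<and> (\<forall>F\<in>HH. F \<in> a i \<longleftrightarrow> F \<in> a')" by blast
  then obtain a' where a': "\<And>i. a' i \<in> sigma_sets Omg GG" "\<And>i. \<forall>F\<in>HH. F \<in> a i \<longleftrightarrow> F \<in> a' i" by metis
  show ?case using a' by (intro bexI[of _ "\<Union>i. a' i"]) (auto intro: sigma_sets.Union)
qed

lemma usc_T:
  assumes "usc_on X g"
  obtains T where "\<And>r. open (T r)" "\<And>r. {x \<in> X. g x < r} = X \<inter> T r"
proof -
  have "\<forall>r. \<exists>T. open T \<and> {x \<in> X. g x < r} = X \<inter> T"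
    using assms unfolding usc_on_def openin_open by blast
  from choice[OF this] obtain T where T: "\<forall>r. open (T r) \<and> {x \<in> X. g x < r} = X \<inter> T r"
    by (elim exE)
  show ?thesis by (rule that) (use T in simp_all)
qed

lemma hypo_closed:
  fixes g :: "'a::topological_space \<Rightarrow> ereal"
  assumes "closed X" "usc_on X g"
  shows "closed (hypo X g)"
proof -
  obtain T where T: "\<And>r. open (T r)" "\<And>r. {x \<in> X. g x < r} = X \<inter> T r"
    using usc_T[OF assms(2)] by blast
  have "open (- hypo X g)"
  proof (rule open_subopen[THEN iffD2], rule ballI)
    fix y assume y: "y \<in> - hypo X g"
    obtain x s where xs: "y = (x, s)" by (cases y)
    show "\<exists>U. open U \<and> y \<in> U \<and> U \<subseteq> - hypo X g"
    proof (cases "x \<in> X")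
      case False
      have 1: "open ((- X) \<times> (UNIV::ereal set))" using assms(1) by (intro open_Times) (simp_all add: open_Compl)
      have 2: "(- X) \<times> (UNIV::ereal set) \<subseteq> - hypo X g" unfolding hypo_def by blast
      have 3: "y \<in> (- X) \<times> (UNIV::ereal set)" using False xs by simp
      show ?thesis using 1 2 3 by blast
    next
      case True
      have "\<not> s \<le> g x" using y xs True unfolding hypo_def by simp
      then have "g x < s" by simp
      then obtain r where r: "g x < r" "r < s" using dense[OF \<open>g x < s\<close>] by blast
      have "x \<in> {x \<in> X. g x < r}" using True r(1) by simp
      then have xT: "x \<in> T r" using T(2)[of r] by simp
      have 2: "T r \<times> {r<..} \<subseteq> - hypo X g"
      proof
        fix z assume z: "z \<in> T r \<times> {r<..}"
        obtain a u where au: "z = (a, u)" by (cases z)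
        show "z \<in> - hypo X g"
        proof
          assume "z \<in> hypo X g"
          then have aX: "a \<in> X" and ua: "u \<le> g a" using au unfolding hypo_def by simp_all
          have aT: "a \<in> T r" and ru: "r < u" using z au by simp_all
          have "a \<in> {x \<in> X. g x < r}" using T(2)[of r] aX aT by simp
          then have "g a < r" by simp
          with ua ru show False by simp
        qed
      qed
      have 1: "open (T r \<times> {r<..})" using T(1) by (intro open_Times) simp_all
      have 3: "y \<in> T r \<times> {r<..}" using xs xT r(2) by simp
      show ?thesis using 1 2 3 by blast
    qed
  qed
  then show ?thesis by (simp add: closed_def)
qed

lemma hypo_downcl: "downcl (hypo X g)"
  unfolding downcl_def hypo_def by (auto intro: order_trans)

lemma hypo_HH: "closed X \<Longrightarrow> usc_on X g \<Longrightarrow> hypo X g \<in> (HH :: ('a::euclidean_space \<times> ereal) set set)"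
  unfolding HH_def using hypo_closed[of X g] hypo_downcl[of X g] by simp

lemma hypo_box_iff: "hypo X g \<inter> (B \<times> {t..}) = {} \<longleftrightarrow> (\<forall>x\<in>B \<inter> X. g x < t)"
proof
  assume E: "hypo X g \<inter> (B \<times> {t..}) = {}"
  show "\<forall>x\<in>B \<inter> X. g x < t"
  proof
    fix x assume x: "x \<in> B \<inter> X"
    show "g x < t"
    proof (rule ccontr)
      assume "\<not> g x < t"
      then have "t \<le> g x" by simp
      then have "(x, t) \<in> hypo X g" using x by (simp add: hypo_def)
      moreover have "(x, t) \<in> B \<times> {t..}" using x by simp
      ultimately show False using E by blast
    qed
  qed
next
  assume A: "\<forall>x\<in>B \<inter> X. g x < t"
  show "hypo X g \<inter> (B \<times> {t..}) = {}"
  proof (rule equals0I)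
    fix z assume z: "z \<in> hypo X g \<inter> (B \<times> {t..})"
    obtain x u where xu: "z = (x, u)" by (cases z)
    have "x \<in> X" "u \<le> g x" "x \<in> B" "t \<le> u" using z xu by (simp_all add: hypo_def)
    then have "t \<le> g x" "g x < t" using A by (simp_all)
    then show False by simp
  qed
qed

lemma hypo_hitU_iff: "hypo X g \<inter> (B \<times> UNIV) = {} \<longleftrightarrow> B \<inter> X = {}"
proof
  assume E: "hypo X g \<inter> (B \<times> UNIV) = {}"
  show "B \<inter> X = {}"
  proof (rule equals0I)
    fix x assume x: "x \<in> B \<inter> X"
    then have "(x, -\<infinity>) \<in> hypo X g" by (simp add: hypo_def)
    moreover have "(x, -\<infinity>) \<in> B \<times> UNIV" using x by simp
    ultimately show False using E by blast
  qed
next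
  assume E: "B \<inter> X = {}"
  show "hypo X g \<inter> (B \<times> UNIV) = {}"
  proof (rule equals0I)
    fix z assume z: "z \<in> hypo X g \<inter> (B \<times> UNIV)"
    obtain x u where xu: "z = (x, u)" by (cases z)
    have "x \<in> X" "x \<in> B" using z xu by (simp_all add: hypo_def)
    then show False using E by blast
  qed
qed

lemma usc_sup_lt:
  fixes g :: "'a::topological_space \<Rightarrow> ereal"
  assumes "compact C" "C \<subseteq> X" "usc_on X g" "C \<noteq> {}" "\<forall>x\<in>C. g x < t"
  shows "(SUP x\<in>C. g x) < t"
proof -
  obtain T where T: "\<And>r. open (T r)" "\<And>r. {x \<in> X. g x < r} = X \<inter> T r"
    using usc_T[OF assms(3)] by blast
  have cov: "C \<subseteq> (\<Union>r\<in>{r. r < t}. T r)"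
  proof
    fix x assume x: "x \<in> C"
    have "g x < t" using assms(5) x by blast
    then obtain r where r: "g x < r" "r < t" by (meson dense)
    have "x \<in> T r" using T(2)[of r] x assms(2) r(1) by blast
    then show "x \<in> (\<Union>r\<in>{r. r < t}. T r)" using r(2) by blast
  qed
  obtain R where R: "R \<subseteq> {r. r < t}" "finite R" "C \<subseteq> (\<Union>r\<in>R. T r)"
    using compactE_image[OF assms(1) T(1) cov] by blast
  have "R \<noteq> {}" using R(3) assms(4) by auto
  then have Mx: "Max R \<in> R" using R(2) by simp
  have "(SUP x\<in>C. g x) \<le> Max R"
  proof (rule SUP_least)
    fix x assume x: "x \<in> C"
    then obtain r where r: "r \<in> R" "x \<in> T r" using R(3) by blast
    have "g x < r" using T(2)[of r] r(2) x assms(2) by blast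
    moreover have "r \<le> Max R" using R(2) r(1) by simp
    ultimately show "g x \<le> Max R" by simp
  qed
  also have "Max R < t" using Mx R(1) by blast
  finally show ?thesis .
qed

lemma sup_iff:
  fixes g :: "'a::topological_space \<Rightarrow> ereal"
  assumes "compact B" "closed X" "usc_on X g" "B \<inter> X \<noteq> {}"
  shows "(SUP x\<in>B \<inter> X. g x) < t \<longleftrightarrow> (\<forall>x\<in>B \<inter> X. g x < t)"
proof
  assume "(SUP x\<in>B \<inter> X. g x) < t"
  then show "\<forall>x\<in>B \<inter> X. g x < t" by (meson SUP_upper order.strict_trans1)
next
  assume "\<forall>x\<in>B \<inter> X. g x < t"
  then show "(SUP x\<in>B \<inter> X. g x) < t"
    using usc_sup_lt[of "B \<inter> X" X g t] assms compact_Int_closed by blast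
qed

lemma rmcs_HH:
  assumes "random_marked_closed_set M Xi Z" "\<omega> \<in> space M"
  shows "hypo (Xi \<omega>) (Z \<omega>) \<in> HH"
  using assms hypo_HH unfolding random_marked_closed_set_def by blast

lemma rmcs_hit:
  assumes "random_marked_closed_set M Xi Z" "compact K"
  shows "{\<omega> \<in> space M. hypo (Xi \<omega>) (Z \<omega>) \<inter> K \<noteq> {}} \<in> sets M"
  using assms unfolding random_marked_closed_set_def by blast

lemma compact_up: "compact B \<Longrightarrow> compact (B \<times> {t::ereal..})"
  by (intro compact_Times) (simp_all add: compact_eq_closed)

lemma compact_BU: "compact B \<Longrightarrow> compact (B \<times> (UNIV::ereal set))"
  by (intro compact_Times) (simp_all add: compact_UNIV)

lemma gset_pre:
  assumes "random_marked_closed_set M (Xi :: _ \<Rightarrow> 'a::euclidean_space set) Z" "finite P" "\<forall>p\<in>P. compact (fst p)"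
  shows "(\<lambda>\<omega>. hypo (Xi \<omega>) (Z \<omega>)) -` gset P \<inter> space M \<in> sets M"
proof -
  define L where "L = (\<Union>p\<in>P. fst p \<times> {snd p..})"
  have cL: "compact L" unfolding L_def using assms(2,3) compact_up by blast
  have "(\<lambda>\<omega>. hypo (Xi \<omega>) (Z \<omega>)) -` gset P \<inter> space M = space M - {\<omega> \<in> space M. hypo (Xi \<omega>) (Z \<omega>) \<inter> L \<noteq> {}}"
  proof (intro set_eqI iffI)
    fix \<omega> assume "\<omega> \<in> (\<lambda>\<omega>. hypo (Xi \<omega>) (Z \<omega>)) -` gset P \<inter> space M"
    then have "\<omega> \<in> space M" "\<forall>(B,t)\<in>P. hypo (Xi \<omega>) (Z \<omega>) \<inter> (B \<times> {t..}) = {}"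
      unfolding gset_def by simp_all
    then show "\<omega> \<in> space M - {\<omega> \<in> space M. hypo (Xi \<omega>) (Z \<omega>) \<inter> L \<noteq> {}}"
      unfolding L_def by (auto simp: split_beta)
  next
    fix \<omega> assume w: "\<omega> \<in> space M - {\<omega> \<in> space M. hypo (Xi \<omega>) (Z \<omega>) \<inter> L \<noteq> {}}"
    then have "hypo (Xi \<omega>) (Z \<omega>) \<in> HH" using rmcs_HH[OF assms(1)] by blast
    then have "closed (hypo (Xi \<omega>) (Z \<omega>))" unfolding HH_def by simp
    moreover have "\<forall>(B,t)\<in>P. hypo (Xi \<omega>) (Z \<omega>) \<inter> (B \<times> {t..}) = {}"
      using w unfolding L_def by (auto simp: split_beta)
    ultimately show "\<omega> \<in> (\<lambda>\<omega>. hypo (Xi \<omega>) (Z \<omega>)) -` gset P \<inter> space M"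
      using w unfolding gset_def by simp
  qed
  also have "\<dots> \<in> sets M" using rmcs_hit[OF assms(1) cL] by (rule sets.compl_sets)
  finally show ?thesis .
qed

lemma meas_G:
  assumes "random_marked_closed_set M (Xi :: _ \<Rightarrow> 'a::euclidean_space set) Z"
  shows "(\<lambda>\<omega>. hypo (Xi \<omega>) (Z \<omega>)) \<in> measurable M (sigma Omg GG)"
proof (rule measurable_measure_of[OF GG_Pow])
  show "(\<lambda>\<omega>. hypo (Xi \<omega>) (Z \<omega>)) \<in> space M \<rightarrow> Omg"
    using rmcs_HH[OF assms] unfolding HH_def Omg_def by blast
next
  fix y :: "('a \<times> ereal) set set" assume "y \<in> GG"
  then obtain P where P: "y = gset P" "finite P" "\<forall>(B,t)\<in>P. compact B" unfolding GG_def by blast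
  have "\<forall>p\<in>P. compact (fst p)" using P(3) by (auto simp: split_beta)
  then show "(\<lambda>\<omega>. hypo (Xi \<omega>) (Z \<omega>)) -` y \<inter> space M \<in> sets M"
    unfolding P(1) using gset_pre[OF assms P(2)] by blast
qed

lemma sets_Bor: "sets (borel_of_top (fell_topology :: ('a::euclidean_space \<times> ereal) set topology))
   = sigma_sets Omg {U. openin fell_topology U}"
proof -
  have "{U. openin (fell_topology :: ('a \<times> ereal) set topology) U} \<subseteq> Pow Omg"
    using openin_subset topspace_fell by blast
  then show ?thesis unfolding borel_of_top_def topspace_fell by (rule sets_measure_of)
qed

lemma meas_Bor:
  assumes "random_marked_closed_set M (Xi :: _ \<Rightarrow> 'a::euclidean_space set) Z"
  shows "(\<lambda>\<omega>. hypo (Xi \<omega>) (Z \<omega>)) \<in> measurable M (borel_of_top fell_topology)"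
  unfolding borel_of_top_def topspace_fell
proof (rule measurable_measure_of)
  show "{U. openin (fell_topology :: ('a \<times> ereal) set topology) U} \<subseteq> Pow Omg"
    using openin_subset topspace_fell by blast
  show "(\<lambda>\<omega>. hypo (Xi \<omega>) (Z \<omega>)) \<in> space M \<rightarrow> Omg"
    using rmcs_HH[OF assms] unfolding HH_def Omg_def by blast
next
  fix U assume "U \<in> {U. openin (fell_topology :: ('a \<times> ereal) set topology) U}"
  then have "U \<in> sigma_sets Omg {U. openin (fell_topology :: ('a \<times> ereal) set topology) U}"
    by (rule sigma_sets.Basic)
  from trace[OF this] obtain A' where A': "A' \<in> sigma_sets Omg GG" "\<forall>F\<in>HH. F \<in> U \<longleftrightarrow> F \<in> A'" by blast
  have "(\<lambda>\<omega>. hypo (Xi \<omega>) (Z \<omega>)) -` U \<inter> space M = (\<lambda>\<omega>. hypo (Xi \<omega>) (Z \<omega>)) -` A' \<inter> space M"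
    using A'(2) rmcs_HH[OF assms] by blast
  also have "\<dots> \<in> sets M"
    using measurable_sets[OF meas_G[OF assms]] A'(1) by (simp add: sets_measure_of[OF GG_Pow])
  finally show "(\<lambda>\<omega>. hypo (Xi \<omega>) (Z \<omega>)) -` U \<inter> space M \<in> sets M" .
qed

lemma prob_gset:
  fixes Xi :: "_ \<Rightarrow> 'a::euclidean_space set"
  assumes rm: "random_marked_closed_set M Xi Z" and ps: "prob_space M"
    and fP: "finite P" and cP: "\<forall>p\<in>P. compact (fst p)" and h: "bij_betw h {1..n} P"
  shows "measure M ((\<lambda>\<omega>. hypo (Xi \<omega>) (Z \<omega>)) -` gset P \<inter> space M)
     = (\<Sum>I\<in>Pow {1..n}. joint_prob M Xi Z n (\<lambda>i. fst (h i)) (\<lambda>i. snd (h i)) I)"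
proof -
  interpret prob_space M by (rule ps)
  define B where "B = (\<lambda>i. fst (h i))"
  define t where "t = (\<lambda>i. snd (h i))"
  define A where "A = (\<lambda>\<omega>. hypo (Xi \<omega>) (Z \<omega>)) -` gset P \<inter> space M"
  define J where "J = (\<lambda>\<omega>. {i\<in>{1..n}. B i \<inter> Xi \<omega> \<noteq> {}})"
  define E where "E = (\<lambda>I. {\<omega> \<in> space M.
        (\<forall>i\<in>I. (SUP x\<in>B i \<inter> Xi \<omega>. Z \<omega> x) < t i \<and> B i \<inter> Xi \<omega> \<noteq> {}) \<and>
        (\<forall>j\<in>{1..n} - I. B j \<inter> Xi \<omega> = {})})"
  have PE: "P = h ` {1..n}" using h by (simp add: bij_betw_def)
  have cB: "compact (B i)" if "i \<in> {1..n}" for i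
    using cP that PE unfolding B_def by blast
  have cl: "closed (Xi \<omega>)" "usc_on (Xi \<omega>) (Z \<omega>)" if "\<omega> \<in> space M" for \<omega>
    using rm that unfolding random_marked_closed_set_def by blast+
  have A_sets: "A \<in> sets M" unfolding A_def using gset_pre[OF rm fP cP] .
  have A_eq: "\<omega> \<in> A \<longleftrightarrow> \<omega> \<in> space M \<and> (\<forall>i\<in>{1..n}. \<forall>x\<in>B i \<inter> Xi \<omega>. Z \<omega> x < t i)" for \<omega>
  proof (cases "\<omega> \<in> space M")
    case True
    have "closed (hypo (Xi \<omega>) (Z \<omega>))" using hypo_closed cl[OF True] by blast
    then have "\<omega> \<in> A \<longleftrightarrow> (\<forall>p\<in>P. hypo (Xi \<omega>) (Z \<omega>) \<inter> (fst p \<times> {snd p..}) = {})"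
      using True unfolding A_def gset_def by (simp add: split_beta)
    also have "\<dots> \<longleftrightarrow> (\<forall>i\<in>{1..n}. hypo (Xi \<omega>) (Z \<omega>) \<inter> (B i \<times> {t i..}) = {})"
      unfolding PE B_def t_def by simp
    also have "\<dots> \<longleftrightarrow> (\<forall>i\<in>{1..n}. \<forall>x\<in>B i \<inter> Xi \<omega>. Z \<omega> x < t i)"
      by (simp only: hypo_box_iff)
    finally show ?thesis using True by simp
  next
    case False then show ?thesis unfolding A_def by simp
  qed
  have E_eq: "E I = {\<omega> \<in> A. J \<omega> = I}" if I: "I \<in> Pow {1..n}" for I
  proof (intro set_eqI iffI)
    fix \<omega> assume w: "\<omega> \<in> E I"
    then have sp: "\<omega> \<in> space M"
      and e1: "\<forall>i\<in>I. (SUP x\<in>B i \<inter> Xi \<omega>. Z \<omega> x) < t i \<and> B i \<inter> Xi \<omega> \<noteq> {}"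
      and e2: "\<forall>j\<in>{1..n} - I. B j \<inter> Xi \<omega> = {}" unfolding E_def by blast+
    have "J \<omega> = I" using e1 e2 I unfolding J_def by blast
    moreover have "\<forall>i\<in>{1..n}. \<forall>x\<in>B i \<inter> Xi \<omega>. Z \<omega> x < t i"
    proof (intro ballI)
      fix i x assume i: "i \<in> {1..n}" and x: "x \<in> B i \<inter> Xi \<omega>"
      then have "i \<in> I" using e2 by blast
      then have "(SUP x\<in>B i \<inter> Xi \<omega>. Z \<omega> x) < t i" "B i \<inter> Xi \<omega> \<noteq> {}" using e1 by blast+
      then have "\<forall>x\<in>B i \<inter> Xi \<omega>. Z \<omega> x < t i" using sup_iff[OF cB[OF i] cl[OF sp]] by blast
      then show "Z \<omega> x < t i" using x by blast
    qed
    ultimately show "\<omega> \<in> {\<omega> \<in> A. J \<omega> = I}" using A_eq sp by blast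
  next
    fix \<omega> assume w: "\<omega> \<in> {\<omega> \<in> A. J \<omega> = I}"
    then have sp: "\<omega> \<in> space M" and a: "\<forall>i\<in>{1..n}. \<forall>x\<in>B i \<inter> Xi \<omega>. Z \<omega> x < t i"
      and j: "J \<omega> = I" using A_eq by blast+
    have "\<forall>i\<in>I. (SUP x\<in>B i \<inter> Xi \<omega>. Z \<omega> x) < t i \<and> B i \<inter> Xi \<omega> \<noteq> {}"
    proof
      fix i assume i: "i \<in> I"
      then have i1: "i \<in> {1..n}" "B i \<inter> Xi \<omega> \<noteq> {}" using j unfolding J_def by blast+
      then have "(SUP x\<in>B i \<inter> Xi \<omega>. Z \<omega> x) < t i"
        using sup_iff[OF cB[OF i1(1)] cl[OF sp] i1(2)] a by blast
      then show "(SUP x\<in>B i \<inter> Xi \<omega>. Z \<omega> x) < t i \<and> B i \<inter> Xi \<omega> \<noteq> {}" using i1(2) by blast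
    qed
    moreover have "\<forall>j\<in>{1..n} - I. B j \<inter> Xi \<omega> = {}" using j unfolding J_def by blast
    ultimately show "\<omega> \<in> E I" using sp unfolding E_def by blast
  qed
  have J_sets: "{\<omega> \<in> space M. J \<omega> = I} \<in> sets M" if I: "I \<in> Pow {1..n}" for I
  proof -
    have "{\<omega> \<in> space M. J \<omega> = I} = {\<omega> \<in> space M. \<forall>i\<in>{1..n}. (i \<in> I \<longleftrightarrow> hypo (Xi \<omega>) (Z \<omega>) \<inter> (B i \<times> UNIV) \<noteq> {})}"
      unfolding J_def using I by (auto simp: hypo_hitU_iff)
    also have "\<dots> \<in> sets M"
    proof (rule sets.sets_Collect_finite_All)
      fix i assume i: "i \<in> {1..n}"
      have hs: "{\<omega> \<in> space M. hypo (Xi \<omega>) (Z \<omega>) \<inter> (B i \<times> UNIV) \<noteq> {}} \<in> sets M"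
        using rmcs_hit[OF rm compact_BU[OF cB[OF i]]] .
      show "{\<omega> \<in> space M. (i \<in> I \<longleftrightarrow> hypo (Xi \<omega>) (Z \<omega>) \<inter> (B i \<times> UNIV) \<noteq> {})} \<in> sets M"
      proof (cases "i \<in> I")
        case True then show ?thesis using hs by simp
      next
        case False
        have "{\<omega> \<in> space M. (i \<in> I \<longleftrightarrow> hypo (Xi \<omega>) (Z \<omega>) \<inter> (B i \<times> UNIV) \<noteq> {})}
           = space M - {\<omega> \<in> space M. hypo (Xi \<omega>) (Z \<omega>) \<inter> (B i \<times> UNIV) \<noteq> {}}" using False by blast
        then show ?thesis using hs by simp
      qed
    qed simp
    finally show ?thesis .
  qed
  have E_sets: "E I \<in> sets M" if "I \<in> Pow {1..n}" for I
  proof -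
    have As: "A \<subseteq> space M" unfolding A_def by (rule Int_lower2)
    have "E I = {\<omega> \<in> A. J \<omega> = I}" by (rule E_eq[OF that])
    also have "\<dots> = A \<inter> {\<omega> \<in> space M. J \<omega> = I}" using As by blast
    finally have "E I = A \<inter> {\<omega> \<in> space M. J \<omega> = I}" .
    then show ?thesis using A_sets J_sets[OF that] by simp
  qed
  have A_union: "A = (\<Union>I\<in>Pow {1..n}. E I)"
  proof (intro set_eqI iffI)
    fix \<omega> assume "\<omega> \<in> A"
    moreover have "J \<omega> \<in> Pow {1..n}" unfolding J_def by blast
    ultimately have "\<omega> \<in> E (J \<omega>)" "J \<omega> \<in> Pow {1..n}" using E_eq by blast+
    then show "\<omega> \<in> (\<Union>I\<in>Pow {1..n}. E I)" by blast
  next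
    fix \<omega> assume "\<omega> \<in> (\<Union>I\<in>Pow {1..n}. E I)"
    then obtain I where "I \<in> Pow {1..n}" "\<omega> \<in> E I" by blast
    then show "\<omega> \<in> A" using E_eq by blast
  qed
  have disj: "disjoint_family_on E (Pow {1..n})"
    unfolding disjoint_family_on_def
  proof (intro ballI impI)
    fix I1 I2 assume I: "I1 \<in> Pow {1..n}" "I2 \<in> Pow {1..n}" "I1 \<noteq> I2"
    show "E I1 \<inter> E I2 = {}" unfolding E_eq[OF I(1)] E_eq[OF I(2)] using I(3) by blast
  qed
  have "measure M A = (\<Sum>I\<in>Pow {1..n}. measure M (E I))"
    unfolding A_union by (rule finite_measure_finite_Union) (use E_sets disj in auto)
  also have "\<dots> = (\<Sum>I\<in>Pow {1..n}. joint_prob M Xi Z n B t I)"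
    unfolding joint_prob_def E_def by simp
  finally show ?thesis unfolding A_def B_def t_def .
qed

lemma gset_Int: "gset P \<inter> gset Q = gset (P \<union> Q)"
  unfolding gset_def by blast

lemma GG_Int_stable: "Int_stable (GG :: ('a::euclidean_space \<times> ereal) set set set)"
  unfolding Int_stable_def
proof (intro ballI)
  fix a b :: "('a \<times> ereal) set set" assume "a \<in> GG" "b \<in> GG"
  then obtain P Q where "a = gset P" "finite P" "\<forall>(B,t)\<in>P. compact B"
    "b = gset Q" "finite Q" "\<forall>(B,t)\<in>Q. compact B" unfolding GG_def by blast
  then show "a \<inter> b \<in> GG" unfolding GG_def by (intro CollectI exI[of _ "P \<union> Q"]) (auto simp: gset_Int)
qed

lemma Omg_GG: "(Omg :: ('a::euclidean_space \<times> ereal) set set) \<in> GG"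
proof -
  have "Omg = gset ({} :: ('a set \<times> ereal) set)" unfolding gset_def Omg_def by simp
  then show ?thesis unfolding GG_def by blast
qed

lemma gen_measure_eq:
  fixes Xi :: "_ \<Rightarrow> 'a::euclidean_space set"
  assumes rm: "random_marked_closed_set M Xi Z" and ps: "prob_space M" and X: "X \<in> GG"
  obtains P n h where "finite P" "\<forall>p\<in>P. compact (fst p)" "bij_betw h {1..n} P" "X = gset P"
    "emeasure (distr M (sigma Omg GG) (\<lambda>\<omega>. hypo (Xi \<omega>) (Z \<omega>))) X
       = ennreal (\<Sum>I\<in>Pow {1..n}. joint_prob M Xi Z n (\<lambda>i. fst (h i)) (\<lambda>i. snd (h i)) I)"
proof -
  interpret prob_space M by (rule ps)
  from X obtain P where P: "X = gset P" "finite P" "\<forall>(B,t)\<in>P. compact B" unfolding GG_def by blast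
  have cP: "\<forall>p\<in>P. compact (fst p)" using P(3) by (auto simp: split_beta)
  obtain h where h: "bij_betw h {1..card P} P" using ex_bij_betw_nat_finite_1[OF P(2)] by blast
  have Xs: "X \<in> sets (sigma Omg GG)" using X by (simp add: sets_measure_of[OF GG_Pow] sigma_sets.Basic)
  have "emeasure (distr M (sigma Omg GG) (\<lambda>\<omega>. hypo (Xi \<omega>) (Z \<omega>))) X
      = emeasure M ((\<lambda>\<omega>. hypo (Xi \<omega>) (Z \<omega>)) -` X \<inter> space M)"
    by (rule emeasure_distr[OF meas_G[OF rm] Xs])
  also have "\<dots> = ennreal (measure M ((\<lambda>\<omega>. hypo (Xi \<omega>) (Z \<omega>)) -` X \<inter> space M))"
    by (rule emeasure_eq_measure)
  also have "\<dots> = ennreal (\<Sum>I\<in>Pow {1..card P}. joint_prob M Xi Z (card P) (\<lambda>i. fst (h i)) (\<lambda>i. snd (h i)) I)"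
    unfolding P(1) using prob_gset[OF rm ps P(2) cP h] by simp
  finally have calc: "emeasure (distr M (sigma Omg GG) (\<lambda>\<omega>. hypo (Xi \<omega>) (Z \<omega>))) X
       = ennreal (\<Sum>I\<in>Pow {1..card P}. joint_prob M Xi Z (card P) (\<lambda>i. fst (h i)) (\<lambda>i. snd (h i)) I)" .
  show ?thesis by (rule that[OF P(2) cP h P(1) calc])
qed

theorem theorem2p3:
  fixes M1 :: "'o1 measure" and M2 :: "'o2 measure"
    and Xi1 :: "'o1 \<Rightarrow> 'a::euclidean_space set" and Z1 :: "'o1 \<Rightarrow> 'a \<Rightarrow> ereal"
    and Xi2 :: "'o2 \<Rightarrow> 'a set" and Z2 :: "'o2 \<Rightarrow> 'a \<Rightarrow> ereal"
  assumes "prob_space M1" and "complete_measure M1"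
    and "prob_space M2" and "complete_measure M2"
    and "random_marked_closed_set M1 Xi1 Z1"
    and "random_marked_closed_set M2 Xi2 Z2"
    and "\<And>n B t I. (\<forall>i\<in>{1..n}. compact (B i)) \<Longrightarrow> I \<subseteq> {1..n} \<Longrightarrow>
           joint_prob M1 Xi1 Z1 n B t I = joint_prob M2 Xi2 Z2 n B t I"
  shows "rmcs_distr M1 Xi1 Z1 = rmcs_distr M2 Xi2 Z2"
proof -
  define f1 where "f1 = (\<lambda>\<omega>. hypo (Xi1 \<omega>) (Z1 \<omega>))"
  define f2 where "f2 = (\<lambda>\<omega>. hypo (Xi2 \<omega>) (Z2 \<omega>))"
  have m1G: "f1 \<in> measurable M1 (sigma Omg GG)" unfolding f1_def by (rule meas_G[OF assms(5)])
  have m2G: "f2 \<in> measurable M2 (sigma Omg GG)" unfolding f2_def by (rule meas_G[OF assms(6)])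
  have m1B: "f1 \<in> measurable M1 (borel_of_top fell_topology)" unfolding f1_def by (rule meas_Bor[OF assms(5)])
  have m2B: "f2 \<in> measurable M2 (borel_of_top fell_topology)" unfolding f2_def by (rule meas_Bor[OF assms(6)])
  interpret P1: prob_space M1 by (rule assms(1))
  interpret P2: prob_space M2 by (rule assms(3))
  define \<nu>1 where "\<nu>1 = distr M1 (sigma Omg GG) f1"
  define \<nu>2 where "\<nu>2 = distr M2 (sigma Omg GG) f2"
  have sG: "sets (sigma Omg GG) = sigma_sets Omg (GG :: ('a \<times> ereal) set set set)"
    by (rule sets_measure_of[OF GG_Pow])
  have nu_eq: "\<nu>1 = \<nu>2"
  proof (rule measure_eqI_generator_eq[OF GG_Int_stable GG_Pow])
    fix X :: "('a \<times> ereal) set set" assume X: "X \<in> GG"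
    obtain P n h where h1: "finite P" "\<forall>p\<in>P. compact (fst p)" "bij_betw h {1..n} P" "X = gset P"
      "emeasure \<nu>1 X = ennreal (\<Sum>I\<in>Pow {1..n}. joint_prob M1 Xi1 Z1 n (\<lambda>i. fst (h i)) (\<lambda>i. snd (h i)) I)"
      by (rule gen_measure_eq[OF assms(5,1) X, folded f1_def, folded \<nu>1_def])
    have e2: "emeasure \<nu>2 X = ennreal (\<Sum>I\<in>Pow {1..n}. joint_prob M2 Xi2 Z2 n (\<lambda>i. fst (h i)) (\<lambda>i. snd (h i)) I)"
    proof -
      have Xs: "X \<in> sets (sigma Omg GG)" using X by (simp add: sG sigma_sets.Basic)
      have "emeasure \<nu>2 X = emeasure M2 (f2 -` X \<inter> space M2)"
        unfolding \<nu>2_def by (rule emeasure_distr[OF m2G Xs])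
      also have "\<dots> = ennreal (measure M2 (f2 -` X \<inter> space M2))"
        by (rule P2.emeasure_eq_measure)
      also have "\<dots> = ennreal (\<Sum>I\<in>Pow {1..n}. joint_prob M2 Xi2 Z2 n (\<lambda>i. fst (h i)) (\<lambda>i. snd (h i)) I)"
        unfolding h1(4) f2_def using prob_gset[OF assms(6,3) h1(1,2,3)] by simp
      finally show ?thesis .
    qed
    have "(\<Sum>I\<in>Pow {1..n}. joint_prob M1 Xi1 Z1 n (\<lambda>i. fst (h i)) (\<lambda>i. snd (h i)) I)
        = (\<Sum>I\<in>Pow {1..n}. joint_prob M2 Xi2 Z2 n (\<lambda>i. fst (h i)) (\<lambda>i. snd (h i)) I)"
    proof (rule sum.cong[OF refl])
      fix I assume I: "I \<in> Pow {1..n}"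
      have "\<forall>i\<in>{1..n}. compact (fst (h i))"
      proof
        fix i assume "i \<in> {1..n}"
        then have "h i \<in> P" by (rule bij_betw_apply[OF h1(3)])
        then show "compact (fst (h i))" using h1(2) by blast
      qed
      moreover have "I \<subseteq> {1..n}" using I by simp
      ultimately show "joint_prob M1 Xi1 Z1 n (\<lambda>i. fst (h i)) (\<lambda>i. snd (h i)) I
          = joint_prob M2 Xi2 Z2 n (\<lambda>i. fst (h i)) (\<lambda>i. snd (h i)) I"
        by (rule assms(7))
    qed
    then show "emeasure \<nu>1 X = emeasure \<nu>2 X" using h1(5) e2 by simp
  next
    show "sets \<nu>1 = sigma_sets Omg GG" unfolding \<nu>1_def sets_distr by (rule sG)
    show "sets \<nu>2 = sigma_sets Omg GG" unfolding \<nu>2_def sets_distr by (rule sG)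
    show "range (\<lambda>i::nat. Omg) \<subseteq> GG" using Omg_GG by (simp add: image_subset_iff)
    show "(\<Union>i::nat. Omg) = Omg" by simp
  next
    fix i :: nat
    have Os: "Omg \<in> sets (sigma Omg GG)" using Omg_GG by (simp add: sG sigma_sets.Basic)
    have "emeasure \<nu>1 Omg = emeasure M1 (f1 -` Omg \<inter> space M1)"
      unfolding \<nu>1_def by (rule emeasure_distr[OF m1G Os])
    then show "emeasure \<nu>1 Omg \<noteq> \<infinity>" by (simp add: P1.emeasure_finite)
  qed
  have key: "emeasure (distr M1 (borel_of_top fell_topology) f1) A = emeasure (distr M2 (borel_of_top fell_topology) f2) A"
    if A: "A \<in> sets (borel_of_top (fell_topology :: ('a \<times> ereal) set topology))" for A
  proof -
    have "A \<in> sigma_sets Omg {U. openin (fell_topology :: ('a \<times> ereal) set topology) U}"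
      using A sets_Bor by blast
    from trace[OF this] obtain A' where A': "A' \<in> sigma_sets Omg GG" "\<forall>F\<in>HH. F \<in> A \<longleftrightarrow> F \<in> A'" by blast
    have A's: "A' \<in> sets (sigma Omg GG)" using A'(1) sG by simp
    have pre1: "f1 -` A \<inter> space M1 = f1 -` A' \<inter> space M1"
      using A'(2) rmcs_HH[OF assms(5)] unfolding f1_def by blast
    have pre2: "f2 -` A \<inter> space M2 = f2 -` A' \<inter> space M2"
      using A'(2) rmcs_HH[OF assms(6)] unfolding f2_def by blast
    have "emeasure (distr M1 (borel_of_top fell_topology) f1) A = emeasure M1 (f1 -` A \<inter> space M1)"
      by (rule emeasure_distr[OF m1B A])
    also have "\<dots> = emeasure \<nu>1 A'" unfolding pre1 \<nu>1_def by (rule emeasure_distr[OF m1G A's, symmetric])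
    also have "\<dots> = emeasure \<nu>2 A'" using nu_eq by simp
    also have "\<dots> = emeasure M2 (f2 -` A \<inter> space M2)" unfolding pre2 \<nu>2_def by (rule emeasure_distr[OF m2G A's])
    also have "\<dots> = emeasure (distr M2 (borel_of_top fell_topology) f2) A"
      by (rule emeasure_distr[OF m2B A, symmetric])
    finally show ?thesis .
  qed
  show ?thesis
    unfolding rmcs_distr_def f1_def[symmetric] f2_def[symmetric]
  proof (rule measure_eqI)
    show "sets (distr M1 (borel_of_top fell_topology) f1) = sets (distr M2 (borel_of_top fell_topology) f2)"
      by simp
    fix A assume "A \<in> sets (distr M1 (borel_of_top (fell_topology :: ('a \<times> ereal) set topology)) f1)"
    then have "A \<in> sets (borel_of_top (fell_topology :: ('a \<times> ereal) set topology))" by simp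
    then show "emeasure (distr M1 (borel_of_top fell_topology) f1) A = emeasure (distr M2 (borel_of_top fell_topology) f2) A"
      by (rule key)
  qed
qed

end
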